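(* Let $n\ge2$, let $\lambda\in\mathbb{R}$ with $\lambda\neq0$, and let $L$ be the operator on $\mathbb{R}[p_1,\dots,p_n]$ (extended to rational functions in the same way) defined by $L\cdot f(p_1,\dots,p_n) = f(L\cdot p_1,\dots,L\cdot p_n)$, where $L\cdot p_1 = \lambda p_1$ and $L\cdot p_k = \lambda p_k + p_{k-1}$ for $k=2,\dots,n$. Then there exist $n-1$ rational functions $$J_k = \frac{G_k}{p_1^k},\qquad k = 1,\dots,n-1,$$ where each $G_k\in\mathbb{R}[p_1,\dots,p_{k+1}]$ is a polynomial of degree $k$, such that $J_1,\dots,J_{n-1}$ are functionally independent outside an algebraic subvariety of positive codimension and $$L\cdot J_k = J_k + \frac{1}{\lambda^k},\qquad k=1,\dots,n-1.$$ *)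

theory Defs
  imports Complex_Main
begin

text \<open>Points of R^n are modelled as functions p :: nat => real; only the
coordinates p 1, ..., p n matter.\<close>

definition monom_val :: "nat \<Rightarrow> (nat \<Rightarrow> nat) \<Rightarrow> (nat \<Rightarrow> real) \<Rightarrow> real" where
  "monom_val m a p = (\<Prod>i\<in>{1..m}. p i ^ a i)"

definition is_poly :: "nat \<Rightarrow> ((nat \<Rightarrow> real) \<Rightarrow> real) \<Rightarrow> bool" where
  "is_poly m f \<longleftrightarrow> (\<exists>A c. finite A \<and> (\<forall>a\<in>A. \<forall>i. i \<notin> {1..m} \<longrightarrow> a i = 0) \<and>
      (\<forall>p. f p = (\<Sum>a\<in>A. c a * monom_val m a p)))"

definition is_poly_deg :: "nat \<Rightarrow> nat \<Rightarrow> ((nat \<Rightarrow> real) \<Rightarrow> real) \<Rightarrow> bool" where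
  "is_poly_deg m d f \<longleftrightarrow> (\<exists>A c. finite A \<and>
      (\<forall>a\<in>A. (\<forall>i. i \<notin> {1..m} \<longrightarrow> a i = 0) \<and> c a \<noteq> 0 \<and> (\<Sum>i\<in>{1..m}. a i) \<le> d) \<and>
      (\<exists>a\<in>A. (\<Sum>i\<in>{1..m}. a i) = d) \<and>
      (\<forall>p. f p = (\<Sum>a\<in>A. c a * monom_val m a p)))"

text \<open>The linear substitution L: (L p)_1 = lam p_1, (L p)_k = lam p_k + p_(k-1), 2 <= k <= n.
  L acts on functions by (L.f)(p) = f(L p).\<close>
definition Lmap :: "real \<Rightarrow> nat \<Rightarrow> (nat \<Rightarrow> real) \<Rightarrow> (nat \<Rightarrow> real)" where
  "Lmap lam n p = (\<lambda>i. if i = 1 then lam * p 1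
                       else if 2 \<le> i \<and> i \<le> n then lam * p i + p (i - 1)
                       else p i)"

definition has_partial :: "((nat \<Rightarrow> real) \<Rightarrow> real) \<Rightarrow> nat \<Rightarrow> (nat \<Rightarrow> real) \<Rightarrow> real \<Rightarrow> bool" where
  "has_partial f j p D \<longleftrightarrow> ((\<lambda>t. f (p(j := t))) has_real_derivative D) (at (p j))"

definition func_indep_at :: "nat \<Rightarrow> nat \<Rightarrow> (nat \<Rightarrow> (nat \<Rightarrow> real) \<Rightarrow> real) \<Rightarrow> (nat \<Rightarrow> real) \<Rightarrow> bool" where
  "func_indep_at n r J p \<longleftrightarrow> (\<exists>D. (\<forall>k\<in>{1..r}. \<forall>j\<in>{1..n}. has_partial (J k) j p (D k j)) \<and>
      (\<forall>c. (\<forall>j\<in>{1..n}. (\<Sum>k=1..r. c k * D k j) = 0) \<longrightarrow> (\<forall>k\<in>{1..r}. c k = 0)))"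

end

theory Submission
  imports Defs
begin


definition hp :: "nat \<Rightarrow> nat \<Rightarrow> ((nat \<Rightarrow> real) \<Rightarrow> real) \<Rightarrow> bool" where
  "hp m d f \<longleftrightarrow> (\<exists>A c. finite A \<and> (\<forall>a\<in>A. (\<forall>i. i \<notin> {1..m} \<longrightarrow> a i = 0) \<and> (\<Sum>i\<in>{1..m}. a i) = d) \<and>
      (\<forall>p. f p = (\<Sum>a\<in>A. c a * monom_val m a p)))"

lemma hp_const: "hp m 0 (\<lambda>p. r)"
  unfolding hp_def
  by (rule exI[of _ "{\<lambda>i. 0}"], rule exI[of _ "\<lambda>_. r"]) (auto simp: monom_val_def)

lemma hp_zero: "hp m d (\<lambda>p. 0)"
  unfolding hp_def by (rule exI[of _ "{}"]) auto

lemma hp_var: assumes "i \<in> {1..m}" shows "hp m 1 (\<lambda>p. p i)"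
  unfolding hp_def
proof (rule exI[of _ "{\<lambda>j. if j = i then 1 else 0}"], rule exI[of _ "\<lambda>_. 1"], intro conjI allI ballI)
  fix p
  have "monom_val m (\<lambda>j. if j = i then 1 else 0) p = (\<Prod>j\<in>{1..m}. if j = i then p j else 1)"
    unfolding monom_val_def by (rule prod.cong) auto
  also have "\<dots> = p i" using assms by (simp add: prod.delta)
  finally show "p i = (\<Sum>a\<in>{\<lambda>j. if j = i then 1 else 0}. 1 * monom_val m a p)" by simp
qed (use assms in auto)

lemma hp_deg: "hp m d f \<Longrightarrow> d = d' \<Longrightarrow> hp m d' f" by simp

lemma hp_add: assumes "hp m d f" "hp m d g" shows "hp m d (\<lambda>p. f p + g p)"
proof -
  obtain A c where A: "finite A" "\<forall>a\<in>A. (\<forall>i. i \<notin> {1..m} \<longrightarrow> a i = 0) \<and> (\<Sum>i\<in>{1..m}. a i) = d"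
     "\<forall>p. f p = (\<Sum>a\<in>A. c a * monom_val m a p)" using assms(1) unfolding hp_def by blast
  obtain B e where B: "finite B" "\<forall>a\<in>B. (\<forall>i. i \<notin> {1..m} \<longrightarrow> a i = 0) \<and> (\<Sum>i\<in>{1..m}. a i) = d"
     "\<forall>p. g p = (\<Sum>a\<in>B. e a * monom_val m a p)" using assms(2) unfolding hp_def by blast
  let ?c = "\<lambda>a. (if a \<in> A then c a else 0) + (if a \<in> B then e a else 0)"
  have "f p + g p = (\<Sum>a\<in>A \<union> B. ?c a * monom_val m a p)" for p
  proof -
    have 1: "(\<Sum>a\<in>A \<union> B. (if a \<in> A then c a else 0) * monom_val m a p) = (\<Sum>a\<in>A. c a * monom_val m a p)"
      by (rule sum.mono_neutral_cong_right) (use A B in auto)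
    have 2: "(\<Sum>a\<in>A \<union> B. (if a \<in> B then e a else 0) * monom_val m a p) = (\<Sum>a\<in>B. e a * monom_val m a p)"
      by (rule sum.mono_neutral_cong_right) (use A B in auto)
    show ?thesis using 1 2 A B by (simp add: distrib_right sum.distrib)
  qed
  then show ?thesis unfolding hp_def using A B
    by (intro exI[of _ "A \<union> B"] exI[of _ ?c]) auto
qed

lemma hp_smult: assumes "hp m d f" shows "hp m d (\<lambda>p. r * f p)"
proof -
  obtain A c where A: "finite A" "\<forall>a\<in>A. (\<forall>i. i \<notin> {1..m} \<longrightarrow> a i = 0) \<and> (\<Sum>i\<in>{1..m}. a i) = d"
     "\<forall>p. f p = (\<Sum>a\<in>A. c a * monom_val m a p)" using assms(1) unfolding hp_def by blast
  then show ?thesis unfolding hp_def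
    by (intro exI[of _ "A"] exI[of _ "\<lambda>a. r * c a"]) (auto simp: sum_distrib_left mult.assoc)
qed

lemma monom_val_add: "monom_val m (\<lambda>i. a i + b i) p = monom_val m a p * monom_val m b p"
  unfolding monom_val_def by (simp add: power_add prod.distrib)

lemma hp_mult: assumes "hp m d1 f" "hp m d2 g" shows "hp m (d1 + d2) (\<lambda>p. f p * g p)"
proof -
  obtain A c where A: "finite A" "\<forall>a\<in>A. (\<forall>i. i \<notin> {1..m} \<longrightarrow> a i = 0) \<and> (\<Sum>i\<in>{1..m}. a i) = d1"
     "\<forall>p. f p = (\<Sum>a\<in>A. c a * monom_val m a p)" using assms(1) unfolding hp_def by blast
  obtain B e where B: "finite B" "\<forall>a\<in>B. (\<forall>i. i \<notin> {1..m} \<longrightarrow> a i = 0) \<and> (\<Sum>i\<in>{1..m}. a i) = d2"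
     "\<forall>p. g p = (\<Sum>a\<in>B. e a * monom_val m a p)" using assms(2) unfolding hp_def by blast
  define \<phi> where "\<phi> = (\<lambda>(a::nat\<Rightarrow>nat, b::nat\<Rightarrow>nat). (\<lambda>i. a i + b i))"
  define C where "C = \<phi> ` (A \<times> B)"
  define h where "h = (\<lambda>(a, b). c a * e b)"
  define cc where "cc = (\<lambda>x. \<Sum>y\<in>{y. y \<in> A \<times> B \<and> \<phi> y = x}. h y)"
  have fin: "finite (A \<times> B)" using A B by auto
  have "f p * g p = (\<Sum>x\<in>C. cc x * monom_val m x p)" for p
  proof -
    have "f p * g p = (\<Sum>y\<in>A \<times> B. h y * monom_val m (\<phi> y) p)"
      using A B by (simp add: sum_product sum.cartesian_product h_def \<phi>_def monom_val_add split_def mult_ac)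
    also have "\<dots> = (\<Sum>x\<in>C. \<Sum>y\<in>{y. y \<in> A \<times> B \<and> \<phi> y = x}. h y * monom_val m (\<phi> y) p)"
      by (rule sum.group[symmetric]) (use fin in \<open>auto simp: C_def\<close>)
    also have "\<dots> = (\<Sum>x\<in>C. cc x * monom_val m x p)"
      unfolding cc_def sum_distrib_right by (rule sum.cong) auto
    finally show ?thesis .
  qed
  moreover have "\<forall>x\<in>C. (\<forall>i. i \<notin> {1..m} \<longrightarrow> x i = 0) \<and> (\<Sum>i\<in>{1..m}. x i) = d1 + d2"
    using A B by (auto simp: C_def \<phi>_def sum.distrib)
  ultimately show ?thesis unfolding hp_def using fin C_def
    by (intro exI[of _ C] exI[of _ cc]) auto
qed

lemma hp_sum: "finite S \<Longrightarrow> (\<And>j. j \<in> S \<Longrightarrow> hp m d (F j)) \<Longrightarrow> hp m d (\<lambda>p. \<Sum>j\<in>S. F j p)"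
proof (induction S rule: finite_induct)
  case empty then show ?case by (simp add: hp_zero)
next
  case (insert x S) then show ?case using hp_add[of m d "F x" "\<lambda>p. \<Sum>j\<in>S. F j p"] by simp
qed

lemma hp_prod: "finite S \<Longrightarrow> (\<And>j. j \<in> S \<Longrightarrow> hp m 1 (F j)) \<Longrightarrow> hp m (card S) (\<lambda>p. \<Prod>j\<in>S. F j p)"
proof (induction S rule: finite_induct)
  case empty then show ?case by (simp add: hp_const)
next
  case (insert x S) then show ?case using hp_mult[of m 1 "F x" "card S" "\<lambda>p. \<Prod>j\<in>S. F j p"] by simp
qed

lemma hp_pow: "hp m d f \<Longrightarrow> hp m (d * e) (\<lambda>p. f p ^ e)"
proof (induction e)
  case 0 then show ?case by (simp add: hp_const)
next
  case (Suc e) then show ?case using hp_mult[of m d f "d * e" "\<lambda>p. f p ^ e"] by (simp add: add.commute)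
qed

lemma hp_indep: assumes "hp m d f" "i \<notin> {1..m}" shows "f (p(i := t)) = f p"
proof -
  obtain A c where A: "\<forall>p. f p = (\<Sum>a\<in>A. c a * monom_val m a p)" using assms(1) unfolding hp_def by blast
  have "monom_val m a (p(i := t)) = monom_val m a p" for a
    unfolding monom_val_def using assms(2) by (intro prod.cong) auto
  then show ?thesis using A by simp
qed

lemma hp_diff: assumes "hp m d f" shows "\<exists>D. ((\<lambda>t. f (p(j := t))) has_real_derivative D) (at x)"
proof -
  obtain A c where A: "finite A" "\<forall>p. f p = (\<Sum>a\<in>A. c a * monom_val m a p)" using assms(1) unfolding hp_def by blast
  have pr: "(\<lambda>t. \<Prod>i\<in>S. (p(j := t)) i ^ a i) differentiable (at x)" if "finite S" for S a
    using that
  proof (induction S rule: finite_induct)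
    case (insert y S)
    have "(\<lambda>t. (p(j := t)) y ^ a y) differentiable (at x)"
      by (cases "y = j") auto
    then show ?case using insert by simp
  qed simp
  have "(\<lambda>t. \<Sum>a\<in>A. c a * monom_val m a (p(j := t))) differentiable (at x)"
    unfolding monom_val_def using A(1) pr by (intro differentiable_sum) auto
  then show ?thesis using A(2) real_differentiable_def by simp
qed

lemma hp_to_deg: assumes "hp m d f" "\<exists>p. f p \<noteq> 0" shows "is_poly_deg m d f"
proof -
  obtain A c where A: "finite A" "\<forall>a\<in>A. (\<forall>i. i \<notin> {1..m} \<longrightarrow> a i = 0) \<and> (\<Sum>i\<in>{1..m}. a i) = d"
     "\<forall>p. f p = (\<Sum>a\<in>A. c a * monom_val m a p)" using assms(1) unfolding hp_def by blast
  define A' where "A' = {a\<in>A. c a \<noteq> 0}"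
  have eq: "\<forall>p. f p = (\<Sum>a\<in>A'. c a * monom_val m a p)"
    using A unfolding A'_def by (auto intro!: sum.mono_neutral_right)
  have "A' \<noteq> {}" using eq assms(2) by auto
  then show ?thesis unfolding is_poly_deg_def using A eq
    by (intro exI[of _ A'] exI[of _ c]) (auto simp: A'_def)
qed



definition Bf :: "real \<Rightarrow> nat \<Rightarrow> real \<Rightarrow> real" where
  "Bf mu j x = (\<Prod>i<j. - (x + real i * mu)) / fact j"
definition Bh :: "real \<Rightarrow> nat \<Rightarrow> (nat \<Rightarrow> real) \<Rightarrow> real" where
  "Bh mu j p = (\<Prod>i<j. - (p 2 + real i * mu * p 1)) / fact j"
definition Wh :: "nat \<Rightarrow> (nat \<Rightarrow> real) \<Rightarrow> real" where
  "Wh m p = (if m = 0 then 1 else p 1 ^ (m - 1) * p (m + 1))"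
definition Uf :: "nat \<Rightarrow> (nat \<Rightarrow> real) \<Rightarrow> real" where
  "Uf m p = (if m = 0 then 1 else p (m + 1) / p 1)"
definition GG :: "real \<Rightarrow> nat \<Rightarrow> (nat \<Rightarrow> real) \<Rightarrow> real" where
  "GG mu k p = mu ^ (k - 1) * p 1 ^ (k - 1) * p 2 + (\<Sum>j\<le>k. Bh mu j p * Wh (k - j) p)"

lemma Bf_pascal: "Bf mu (Suc j) (x + mu) + mu * Bf mu j (x + mu) = Bf mu (Suc j) x"
proof -
  define P where "P = (\<Prod>i<j. - (x + real (Suc i) * mu))"
  have 1: "Bf mu (Suc j) (x + mu) = P * (- (x + real (Suc j) * mu)) / fact (Suc j)"
    unfolding Bf_def P_def by (simp add: algebra_simps)
  have 2: "Bf mu j (x + mu) = P / fact j"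
    unfolding Bf_def P_def by (simp add: algebra_simps)
  have 3: "Bf mu (Suc j) x = (-x) * P / fact (Suc j)"
    unfolding Bf_def P_def prod.lessThan_Suc_shift by (simp add: algebra_simps)
  show ?thesis unfolding 1 2 3 by (simp add: field_simps fact_Suc del: of_nat_Suc)
qed

lemma conv:
  fixes b b' v v' :: "nat \<Rightarrow> real"
  assumes "b' 0 = b 0" "\<And>j. b (Suc j) = b' (Suc j) + mu * b' j"
    "v' 0 = v 0" "\<And>m. v' (Suc m) = v (Suc m) + mu * v m"
  shows "(\<Sum>j\<le>k. b' j * v' (k - j)) = (\<Sum>j\<le>k. b j * v (k - j))"
proof (cases k)
  case 0 then show ?thesis using assms by simp
next
  case (Suc k')
  have L: "(\<Sum>j\<le>k. b' j * v' (k - j)) = (\<Sum>j\<le>k. b' j * v (k - j)) + mu * (\<Sum>j\<le>k'. b' j * v (k' - j))"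
  proof -
    have "(\<Sum>j\<le>k. b' j * v' (k - j)) = (\<Sum>j\<le>k'. b' j * v' (Suc (k' - j))) + b' k * v' 0"
      unfolding Suc sum.atMost_Suc by (simp add: Suc_diff_le)
    also have "\<dots> = (\<Sum>j\<le>k'. b' j * v (Suc (k' - j))) + mu * (\<Sum>j\<le>k'. b' j * v (k' - j)) + b' k * v 0"
      using assms by (simp add: algebra_simps sum.distrib sum_distrib_left)
    moreover have "(\<Sum>j\<le>k'. b' j * v (Suc (k' - j))) + b' k * v 0 = (\<Sum>j\<le>k. b' j * v (k - j))"
      unfolding Suc sum.atMost_Suc by (simp add: Suc_diff_le)
    ultimately show ?thesis by simp
  qed
  have R: "(\<Sum>j\<le>k. b j * v (k - j)) = (\<Sum>j\<le>k. b' j * v (k - j)) + mu * (\<Sum>j\<le>k'. b' j * v (k' - j))"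
  proof -
    have "(\<Sum>j\<le>k. b j * v (k - j)) = b 0 * v k + (\<Sum>j\<le>k'. b (Suc j) * v (k' - j))"
      unfolding Suc sum.atMost_Suc_shift by simp
    also have "\<dots> = b' 0 * v k + (\<Sum>j\<le>k'. b' (Suc j) * v (k' - j)) + mu * (\<Sum>j\<le>k'. b' j * v (k' - j))"
      using assms by (simp add: algebra_simps sum.distrib sum_distrib_left)
    moreover have "b' 0 * v k + (\<Sum>j\<le>k'. b' (Suc j) * v (k' - j)) = (\<Sum>j\<le>k. b' j * v (k - j))"
      unfolding Suc sum.atMost_Suc_shift by simp
    ultimately show ?thesis by simp
  qed
  show ?thesis using L R by simp
qed

lemma Bh_eq: "p 1 \<noteq> 0 \<Longrightarrow> Bh mu j p = p 1 ^ j * Bf mu j (p 2 / p 1)"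
  unfolding Bh_def Bf_def
proof -
  assume h: "p 1 \<noteq> 0"
  have "(\<Prod>i<j. - (p 2 + real i * mu * p 1)) = (\<Prod>i<j. p 1 * - (p 2 / p 1 + real i * mu))"
    using h by (intro prod.cong) (auto simp: field_simps)
  then show "(\<Prod>i<j. - (p 2 + real i * mu * p 1)) / fact j = p 1 ^ j * ((\<Prod>i<j. - (p 2 / p 1 + real i * mu)) / fact j)"
    by (simp add: prod.distrib)
qed

lemma Wh_eq: "p 1 \<noteq> 0 \<Longrightarrow> Wh m p = p 1 ^ m * Uf m p"
  unfolding Wh_def Uf_def by (cases m) (auto simp: field_simps)

definition Jf :: "real \<Rightarrow> nat \<Rightarrow> (nat \<Rightarrow> real) \<Rightarrow> real" where
  "Jf mu k p = mu ^ (k - 1) * (p 2 / p 1) + (\<Sum>j\<le>k. Bf mu j (p 2 / p 1) * Uf (k - j) p)"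

lemma GG_eq: assumes "p 1 \<noteq> 0" "k \<ge> 1" shows "GG mu k p = p 1 ^ k * Jf mu k p"
proof -
  have "(\<Sum>j\<le>k. Bh mu j p * Wh (k - j) p) = (\<Sum>j\<le>k. p 1 ^ k * (Bf mu j (p 2 / p 1) * Uf (k - j) p))"
    using assms by (intro sum.cong) (auto simp: Bh_eq Wh_eq power_add[symmetric])
  moreover have "mu ^ (k - 1) * p 1 ^ (k - 1) * p 2 = p 1 ^ k * (mu ^ (k - 1) * (p 2 / p 1))"
    using assms by (cases k) (auto simp: field_simps)
  ultimately show ?thesis unfolding GG_def Jf_def by (simp add: sum_distrib_left distrib_left)
qed



lemma Jf_inv:
  assumes lam: "lam \<noteq> 0" and n: "n \<ge> 2" and k: "1 \<le> k" "k \<le> n - 1" and p1: "p 1 \<noteq> 0"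
  shows "Jf (1/lam) k (Lmap lam n p) = Jf (1/lam) k p + (1/lam) ^ k"
proof -
  define mu where "mu = 1 / lam"
  define q where "q = Lmap lam n p"
  define x where "x = p 2 / p 1"
  have q1: "q 1 = lam * p 1" unfolding q_def Lmap_def by simp
  have q2: "q 2 / q 1 = x + mu" unfolding q_def Lmap_def x_def mu_def using n lam p1
    by (simp add: field_simps)
  have qm: "Uf (Suc m) q = Uf (Suc m) p + mu * Uf m p" if "Suc m \<le> k" for m
  proof -
    have "q (Suc m + 1) = lam * p (Suc m + 1) + p (m + 1)"
      unfolding q_def Lmap_def using that k by auto
    then show ?thesis unfolding Uf_def using q1 lam p1 by (cases m) (auto simp: field_simps mu_def)
  qed
  define v' where "v' = (\<lambda>m. if m = 0 then 1 else Uf m p + mu * Uf (m - 1) p)"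
  have "(\<Sum>j\<le>k. Bf mu j (q 2 / q 1) * Uf (k - j) q) = (\<Sum>j\<le>k. Bf mu j (x + mu) * v' (k - j))"
  proof (intro sum.cong refl)
    fix j assume "j \<in> {..k}"
    then have "Uf (k - j) q = v' (k - j)"
      using qm[of "k - j - 1"] unfolding v'_def by (cases "k - j") (auto simp: Uf_def)
    then show "Bf mu j (q 2 / q 1) * Uf (k - j) q = Bf mu j (x + mu) * v' (k - j)" using q2 by simp
  qed
  also have "\<dots> = (\<Sum>j\<le>k. Bf mu j x * Uf (k - j) p)"
    by (rule conv[where mu = mu]) (simp_all add: v'_def Uf_def Bf_def[of mu 0], metis Bf_pascal)
  finally have S: "(\<Sum>j\<le>k. Bf mu j (q 2 / q 1) * Uf (k - j) q) = (\<Sum>j\<le>k. Bf mu j x * Uf (k - j) p)" .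
  have "mu ^ (k - 1) * (x + mu) = mu ^ (k - 1) * x + mu ^ k"
    using k by (cases k) (auto simp: algebra_simps)
  then show ?thesis using S q2 unfolding Jf_def q_def[symmetric] mu_def[symmetric] x_def[symmetric]
    by simp
qed



lemma hp_cong: "hp m d f \<Longrightarrow> (\<And>p. f p = g p) \<Longrightarrow> hp m d g"
proof -
  assume "hp m d f" "\<And>p. f p = g p"
  moreover have "f = g" using \<open>\<And>p. f p = g p\<close> by auto
  ultimately show ?thesis by simp
qed

lemma hp_Bh: assumes "m \<ge> 2" shows "hp m j (Bh mu j)"
proof -
  have "hp m (card {..<j}) (\<lambda>p. \<Prod>i<j. (-1) * p 2 + (- (real i * mu)) * p 1)"
    using assms by (intro hp_prod hp_add hp_smult hp_var) auto
  then have "hp m j (\<lambda>p. (1 / fact j) * (\<Prod>i<j. (-1) * p 2 + (- (real i * mu)) * p 1))"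
    by (intro hp_smult) simp
  then show ?thesis by (rule hp_cong) (simp add: Bh_def algebra_simps)
qed

lemma hp_Wh: assumes "r \<le> k" shows "hp (k + 1) r (Wh r)"
proof (cases r)
  case 0 then show ?thesis using hp_const[of "k+1" 1] by (auto simp: Wh_def intro: hp_cong)
next
  case (Suc r')
  have "hp (k + 1) (1 * r' + 1) (\<lambda>p. p 1 ^ r' * p (r + 1))"
    using assms Suc by (intro hp_mult hp_pow hp_var) auto
  then show ?thesis using Suc by (auto simp: Wh_def intro: hp_cong)
qed

lemma hp_GG: assumes "k \<ge> 1" shows "hp (k + 1) k (GG mu k)"
proof -
  have 1: "hp (k + 1) (1 * (k - 1) + 1) (\<lambda>p. mu ^ (k - 1) * (p 1 ^ (k - 1) * p 2))"
    using assms by (intro hp_smult hp_mult hp_pow hp_var) auto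
  have 2: "hp (k + 1) k (\<lambda>p. \<Sum>j\<le>k. Bh mu j p * Wh (k - j) p)"
  proof (intro hp_sum)
    fix j assume "j \<in> {..k}"
    then have "hp (k + 1) (j + (k - j)) (\<lambda>p. Bh mu j p * Wh (k - j) p)"
      using assms by (intro hp_mult hp_Bh hp_Wh) auto
    then show "hp (k + 1) k (\<lambda>p. Bh mu j p * Wh (k - j) p)" using \<open>j \<in> {..k}\<close> by simp
  qed simp
  have "hp (k + 1) k (\<lambda>p. mu ^ (k - 1) * (p 1 ^ (k - 1) * p 2) + (\<Sum>j\<le>k. Bh mu j p * Wh (k - j) p))"
    using 1 2 assms by (intro hp_add) auto
  then show ?thesis by (rule hp_cong) (simp add: GG_def mult.assoc)
qed

lemma GG_upd: assumes "k \<ge> 1"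
  shows "GG mu k (p(k + 1 := t)) = GG mu k p + p 1 ^ (k - 1) * (t - p (k + 1))"
proof (cases "k = 1")
  case True
  have "GG mu 1 p = p 2" for p
    by (simp add: GG_def Bh_def Wh_def atMost_Suc numeral_2_eq_2)
  then show ?thesis using True by (simp add: numeral_2_eq_2)
next
  case False
  then obtain k' where k': "k = Suc k'" "k' \<ge> 1" using assms by (cases k) auto
  define R where "R = (\<lambda>p. mu ^ (k - 1) * p 1 ^ (k - 1) * p 2 + (\<Sum>j\<le>k'. Bh mu (Suc j) p * Wh (k' - j) p))"
  have G: "GG mu k p = R p + p 1 ^ (k - 1) * p (k + 1)" for p
    unfolding GG_def R_def k'(1) sum.atMost_Suc_shift by (simp add: Bh_def Wh_def)
  have "R (p(k + 1 := t)) = R p"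
    unfolding R_def using k' by (auto simp: Bh_def Wh_def intro!: sum.cong prod.cong)
  then show ?thesis unfolding G using k' by (simp add: algebra_simps)
qed



lemma GG_inv:
  assumes lam: "lam \<noteq> 0" and n: "n \<ge> 2" and k: "1 \<le> k" "k \<le> n - 1" and p1: "p 1 \<noteq> 0"
  shows "GG (1/lam) k (Lmap lam n p) / (Lmap lam n p 1) ^ k = GG (1/lam) k p / p 1 ^ k + 1 / lam ^ k"
proof -
  have q1: "Lmap lam n p 1 = lam * p 1" unfolding Lmap_def by simp
  then have "Lmap lam n p 1 \<noteq> 0" using lam p1 by simp
  then show ?thesis using GG_eq[of p, OF p1 k(1)] GG_eq[of "Lmap lam n p", OF _ k(1)] Jf_inv[of lam n k p, OF lam n k p1] p1
    by (simp add: power_divide)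
qed

lemma partial_exists:
  assumes "k \<ge> 1" "p 1 \<noteq> 0"
  shows "\<exists>D. has_partial (\<lambda>q. GG mu k q / q 1 ^ k) j p D"
proof -
  obtain D1 where D1: "((\<lambda>t. GG mu k (p(j := t))) has_real_derivative D1) (at (p j))"
    using hp_diff[OF hp_GG[OF assms(1)]] by blast
  have "hp (k + 1) (1 * k) (\<lambda>q. q 1 ^ k)" by (intro hp_pow hp_var) auto
  then obtain D2 where D2: "((\<lambda>t. (p(j := t)) 1 ^ k) has_real_derivative D2) (at (p j))"
    using hp_diff by blast
  have "(p(j := p j)) 1 ^ k \<noteq> 0" using assms by simp
  from DERIV_divide[OF D1 D2 this] show ?thesis unfolding has_partial_def by blast
qed

theorem corollary3:
  fixes n :: nat and lam :: real
  assumes "n \<ge> 2" and "lam \<noteq> 0"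
  shows "\<exists>G :: nat \<Rightarrow> (nat \<Rightarrow> real) \<Rightarrow> real.
     (\<forall>k\<in>{1..n-1}. is_poly_deg (k + 1) k (G k)) \<and>
     (\<exists>Q. is_poly n Q \<and> (\<exists>p. Q p \<noteq> 0) \<and>
        (\<forall>p. p 1 \<noteq> 0 \<and> Q p \<noteq> 0 \<longrightarrow>
             func_indep_at n (n - 1) (\<lambda>k q. G k q / q 1 ^ k) p)) \<and>
     (\<forall>k\<in>{1..n-1}. \<forall>p. p 1 \<noteq> 0 \<longrightarrow>
        G k (Lmap lam n p) / (Lmap lam n p 1) ^ k = G k p / p 1 ^ k + 1 / lam ^ k)"
proof (intro exI[of _ "GG (1/lam)"] conjI)
  show inv: "\<forall>k\<in>{1..n-1}. \<forall>p. p 1 \<noteq> 0 \<longrightarrow>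
        GG (1/lam) k (Lmap lam n p) / (Lmap lam n p 1) ^ k = GG (1/lam) k p / p 1 ^ k + 1 / lam ^ k"
    using GG_inv[OF assms(2,1)] by auto
  show "\<forall>k\<in>{1..n-1}. is_poly_deg (k + 1) k (GG (1/lam) k)"
  proof
    fix k assume k: "k \<in> {1..n-1}"
    have "\<exists>p. GG (1/lam) k p \<noteq> 0"
    proof (rule ccontr)
      assume "\<not> ?thesis"
      then have "\<forall>p. GG (1/lam) k p = 0" by auto
      moreover have "GG (1/lam) k (Lmap lam n (\<lambda>_. 1)) / (Lmap lam n (\<lambda>_. 1) 1) ^ k
          = GG (1/lam) k (\<lambda>_. 1) / ((\<lambda>_. 1::real) 1) ^ k + 1 / lam ^ k"
        using bspec[OF inv k, THEN spec[of _ "\<lambda>_. 1"]] by simp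
      ultimately have "(0::real) = 1 / lam ^ k" by simp
      then show False using assms(2) by simp
    qed
    then show "is_poly_deg (k + 1) k (GG (1/lam) k)"
      using hp_to_deg hp_GG k by auto
  qed
  show "\<exists>Q. is_poly n Q \<and> (\<exists>p. Q p \<noteq> 0) \<and>
        (\<forall>p. p 1 \<noteq> 0 \<and> Q p \<noteq> 0 \<longrightarrow>
             func_indep_at n (n - 1) (\<lambda>k q. GG (1/lam) k q / q 1 ^ k) p)"
  proof (rule exI[of _ "\<lambda>p. 1"], intro conjI allI impI)
    show "is_poly n (\<lambda>p. 1)" unfolding is_poly_def
      by (rule exI[of _ "{\<lambda>i. 0}"], rule exI[of _ "\<lambda>_. 1"]) (auto simp: monom_val_def)
    show "\<exists>p::nat\<Rightarrow>real. (\<lambda>p. 1::real) p \<noteq> 0" by simp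
    fix p :: "nat \<Rightarrow> real" assume "p 1 \<noteq> 0 \<and> (1::real) \<noteq> 0"
    then have p1: "p 1 \<noteq> 0" by simp
    define J where "J = (\<lambda>k q. GG (1/lam) k q / q 1 ^ k)"
    define D where "D = (\<lambda>k j. if j = k + 1 then 1 / p 1 else if j > k + 1 then 0
                               else (SOME D. has_partial (J k) j p D))"
    have hpD: "has_partial (J k) j p (D k j)" if "k \<ge> 1" for k j
    proof -
      consider "j = k + 1" | "j > k + 1" | "j < k + 1" by linarith
      then show ?thesis
      proof cases
        case 1
        have "(\<lambda>t. J k (p(j := t))) = (\<lambda>t. (GG (1/lam) k p + p 1 ^ (k - 1) * (t - p (k + 1))) / p 1 ^ k)"
          unfolding J_def 1 using GG_upd[OF that, of "1/lam" p] that by simp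
        moreover have "((\<lambda>t. (GG (1/lam) k p + p 1 ^ (k - 1) * (t - p (k + 1))) / p 1 ^ k)
            has_real_derivative (p 1 ^ (k - 1) / p 1 ^ k)) (at (p j))"
          using p1 by (auto intro!: derivative_eq_intros)
        moreover have "p 1 ^ (k - 1) / p 1 ^ k = 1 / p 1" using that p1
          by (cases k) auto
        ultimately show ?thesis unfolding has_partial_def D_def using 1 by simp
      next
        case 2
        have "j \<notin> {1..k+1}" using 2 by auto
        then have "(\<lambda>t. J k (p(j := t))) = (\<lambda>t. J k p)"
          using hp_indep[OF hp_GG[OF that] \<open>j \<notin> {1..k+1}\<close>] 2 unfolding J_def by simp
        then show ?thesis unfolding has_partial_def D_def using 2 by simp
      next
        case 3
        have "\<exists>D. has_partial (J k) j p D" unfolding J_def using partial_exists[of k p, OF that p1] .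
        then show ?thesis unfolding D_def using 3 by (simp add: someI_ex)
      qed
    qed
    show "func_indep_at n (n - 1) (\<lambda>k q. GG (1/lam) k q / q 1 ^ k) p"
      unfolding func_indep_at_def J_def[symmetric]
    proof (intro exI[of _ D] conjI ballI allI impI)
      fix k j assume "k \<in> {1..n-1}" "j \<in> {1..n}"
      then show "has_partial (J k) j p (D k j)" using hpD by auto
    next
      fix c :: "nat \<Rightarrow> real" and kk
      assume H: "\<forall>j\<in>{1..n}. (\<Sum>k = 1..n - 1. c k * D k j) = 0" and kk: "kk \<in> {1..n - 1}"
      have "\<forall>k. 1 \<le> k \<longrightarrow> k \<le> n - 1 \<longrightarrow> c k = 0"
      proof (intro allI)
        fix k show "1 \<le> k \<longrightarrow> k \<le> n - 1 \<longrightarrow> c k = 0"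
        proof (induction "n - k" arbitrary: k rule: less_induct)
          case less
          show ?case
          proof (intro impI)
            assume k: "1 \<le> k" "k \<le> n - 1"
            have "(\<Sum>k' = 1..n - 1. c k' * D k' (k + 1)) = c k * D k (k + 1) + (\<Sum>k'\<in>{1..n - 1} - {k}. c k' * D k' (k + 1))"
              using k by (subst sum.remove[of _ k]) auto
            also have "(\<Sum>k'\<in>{1..n - 1} - {k}. c k' * D k' (k + 1)) = 0"
            proof (rule sum.neutral, intro ballI)
              fix k' assume k': "k' \<in> {1..n - 1} - {k}"
              show "c k' * D k' (k + 1) = 0"
              proof (cases "k' < k")
                case True then show ?thesis by (simp add: D_def)
              next
                case False
                then have "c k' = 0" using less[of k'] k' k by auto
                then show ?thesis by simp
              qed
            qed
            finally have "(\<Sum>k' = 1..n - 1. c k' * D k' (k + 1)) = c k * (1 / p 1)"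
              by (simp add: D_def)
            moreover have "(\<Sum>k' = 1..n - 1. c k' * D k' (k + 1)) = 0" using H k by auto
            ultimately show "c k = 0" using p1 by simp
          qed
        qed
      qed
      then show "c kk = 0" using kk by auto
    qed
  qed
qed

end
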